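(* Let $m,n$ be positive integers with $4\mid mn$. If there exists a Hadamard matrix of order $mn$, then there exists an $(mn-1)$--$\mathrm{MOFR}(2m,2n;2)$.
   Context: A Hadamard matrix of order $N$ is an $N\times N$ matrix $H$ with entries in $\{1,-1\}$ satisfying $HH^T=NI_N$. A frequency rectangle of type $\mathrm{FR}(m,n;q)$ is an $m\times n$ array on a symbol set of size $q$ in which each symbol appears exactly $n/q$ times in each row and $m/q$ times in each column. Two frequency rectangles of the same type are orthogonal if upon superimposition each ordered pair of symbols appears equally often. A $k$--$\mathrm{MOFR}(m,n;q)$ is a set of $k$ pairwise orthogonal frequency rectangles of type $\mathrm{FR}(m,n;q)$. *)

theory Defs
  imports Main
begin

(* An N x N matrix is a function nat => nat => int, only indices < N matter. *)
definition hadamard :: "nat \<Rightarrow> (nat \<Rightarrow> nat \<Rightarrow> int) \<Rightarrow> bool" where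
  "hadamard N H \<longleftrightarrow>
     (\<forall>i<N. \<forall>j<N. H i j = 1 \<or> H i j = -1) \<and>
     (\<forall>i<N. \<forall>k<N. (\<Sum>j<N. H i j * H k j) = (if i = k then int N else 0))"

definition freq_rect :: "nat \<Rightarrow> nat \<Rightarrow> nat \<Rightarrow> (nat \<Rightarrow> nat \<Rightarrow> nat) \<Rightarrow> bool" where
  "freq_rect m n q A \<longleftrightarrow>
     (\<forall>i<m. \<forall>j<n. A i j < q) \<and>
     (\<forall>i<m. \<forall>s<q. q * card {j. j < n \<and> A i j = s} = n) \<and>
     (\<forall>j<n. \<forall>s<q. q * card {i. i < m \<and> A i j = s} = m)"

definition orth_rect :: "nat \<Rightarrow> nat \<Rightarrow> nat \<Rightarrow> (nat \<Rightarrow> nat \<Rightarrow> nat) \<Rightarrow> (nat \<Rightarrow> nat \<Rightarrow> nat) \<Rightarrow> bool" where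
  "orth_rect m n q A B \<longleftrightarrow>
     (\<forall>s<q. \<forall>t<q. q * q * card {(i, j). i < m \<and> j < n \<and> A i j = s \<and> B i j = t} = m * n)"

definition MOFR :: "nat \<Rightarrow> nat \<Rightarrow> nat \<Rightarrow> nat \<Rightarrow> (nat \<Rightarrow> nat \<Rightarrow> nat \<Rightarrow> nat) \<Rightarrow> bool" where
  "MOFR k m n q F \<longleftrightarrow>
     (\<forall>r<k. freq_rect m n q (F r)) \<and>
     (\<forall>r<k. \<forall>r'<k. r \<noteq> r' \<longrightarrow> orth_rect m n q (F r) (F r'))"

end

theory Submission
  imports Defs
begin

lemma split_sum: "(\<Sum>k<a+b. f k) = (\<Sum>k<a. f k) + (\<Sum>k<b. f (a+k::nat)) "
  by (induction b) (simp_all add: add_ac)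

definition eps :: "nat \<Rightarrow> nat \<Rightarrow> int" where "eps m i = (if i < m then 1 else -1)"

lemma L0: fixes g :: "nat \<Rightarrow> int" shows "(\<Sum>i<2*m. eps m i * g (i mod m)) = 0"
proof -
  have "(\<Sum>i<2*m. eps m i * g (i mod m)) = (\<Sum>i<m. eps m i * g (i mod m)) + (\<Sum>i<m. eps m (m+i) * g ((m+i) mod m))"
    using split_sum[of "\<lambda>i. eps m i * g (i mod m)" m m] by (simp add: mult_2)
  also have "\<dots> = (\<Sum>i<m. g i) + (\<Sum>i<m. - g i)"
    by (intro arg_cong2[where f="(+)"] sum.cong) (auto simp: eps_def)
  finally show ?thesis by (simp add: sum_negf)
qed

lemma L1: fixes g :: "nat \<Rightarrow> int" shows "(\<Sum>i<2*m. g (i mod m)) = 2 * (\<Sum>i<m. g i)"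
proof -
  have "(\<Sum>i<2*m. g (i mod m)) = (\<Sum>i<m+m. g (i mod m))" by (simp only: mult_2)
  also have "\<dots> = (\<Sum>i<m. g (i mod m)) + (\<Sum>i<m. g ((m+i) mod m))"
    by (rule split_sum)
  also have "\<dots> = (\<Sum>i<m. g i) + (\<Sum>i<m. g i)"
    by (intro arg_cong2[where f="(+)"] sum.cong) auto
  also have "\<dots> = 2 * (\<Sum>i<m. g i)" by (simp only: mult_2)
  finally show ?thesis .
qed

lemma L2: fixes h :: "nat \<Rightarrow> int" shows "(\<Sum>i<m. \<Sum>j<n. h (i*n+j)) = (\<Sum>k<m*n. h k :: int)"
proof (induction m)
  case 0 then show ?case by simp
next
  case (Suc m)
  have "(\<Sum>k<Suc m*n. h k) = (\<Sum>k<m*n. h k) + (\<Sum>j<n. h (m*n+j))"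
    using split_sum[of h "m*n" n] by (simp add: add.commute)
  then show ?case using Suc by simp
qed

lemma idx_bound: "a < m \<Longrightarrow> b < n \<Longrightarrow> a*n+b < m*(n::nat)"
proof -
  assume "a < m" "b < n"
  then have "Suc a * n \<le> m * n" by (intro mult_right_mono) auto
  then show ?thesis using \<open>b < n\<close> by simp
qed

lemma card_sum: "int (card {j. j < (N::nat) \<and> P j}) = (\<Sum>j<N. of_bool (P j))"
proof -
  have "{j. j < N \<and> P j} = {..<N} \<inter> {j. P j}" by auto
  moreover have "(\<Sum>j<N. of_bool (P j)) = int (card ({..<N} \<inter> {j. P j}))"
    by (rule sum_of_bool_eq) simp_all
  ultimately show ?thesis by simp
qed
lemma card_sum2: "int (card {(i, j). i < (M::nat) \<and> j < (N::nat) \<and> P i j}) = (\<Sum>i<M. \<Sum>j<N. of_bool (P i j))"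
proof -
  have "{(i, j). i < M \<and> j < N \<and> P i j} = ({..<M} \<times> {..<N}) \<inter> {x. case_prod P x}" by auto
  moreover have "(\<Sum>x\<in>{..<M} \<times> {..<N}. of_bool (case_prod P x)) = int (card (({..<M} \<times> {..<N}) \<inter> {x. case_prod P x}))"
    by (rule sum_of_bool_eq) simp_all
  moreover have "(\<Sum>x\<in>{..<M} \<times> {..<N}. (of_bool (case_prod P x)::int)) = (\<Sum>i<M. \<Sum>j<N. of_bool (P i j))"
  proof -
    have "(\<Sum>x\<in>{..<M} \<times> {..<N}. (of_bool (case_prod P x)::int)) = (\<Sum>x\<in>{..<M} \<times> {..<N}. case_prod (\<lambda>i j. of_bool (P i j)) x)"
      by (rule sum.cong) auto
    also have "\<dots> = (\<Sum>i<M. \<Sum>j<N. of_bool (P i j))"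
      by (rule sum.cartesian_product[symmetric])
    finally show ?thesis .
  qed
  ultimately show ?thesis by simp
qed

definition alpha :: "nat \<Rightarrow> int" where "alpha s = (if s = 0 then 1 else -1)"

lemma ind1: "(x = 1 \<or> x = -1) \<Longrightarrow> s < 2 \<Longrightarrow>
   2 * of_bool ((if x = (1::int) then 0 else 1::nat) = s) = 1 + alpha s * x"
  by (auto simp: alpha_def)

lemma ind2: "(x = 1 \<or> x = -1) \<Longrightarrow> (y = 1 \<or> y = -1) \<Longrightarrow> s < 2 \<Longrightarrow> t < 2 \<Longrightarrow>
   4 * of_bool ((if x = (1::int) then 0 else 1::nat) = s \<and> (if y = (1::int) then 0 else 1::nat) = t)
     = 1 + alpha s * x + alpha t * y + alpha s * alpha t * (x * y)"
  by (auto simp: alpha_def)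

theorem mainTheorem2:
  fixes m n :: nat
  assumes "m > 0" and "n > 0" and "4 dvd m * n"
    and "\<exists>H. hadamard (m * n) H"
  shows "\<exists>F. MOFR (m * n - 1) (2 * m) (2 * n) 2 F"
proof -
  obtain H where H: "hadamard (m*n) H" using assms(4) by blast
  define k where "k = (\<lambda>i j. (i mod m)*n + j mod n)"
  define sg where "sg = (\<lambda>r i j. H r (k i j) * eps m i * eps n j)"
  define F where "F = (\<lambda>r i j. if sg r i j = 1 then 0 else (1::nat))"
  have kb: "k i j < m*n" for i j unfolding k_def using assms(1,2) by (intro idx_bound) auto
  have Hpm: "r < m*n \<Longrightarrow> j < m*n \<Longrightarrow> H r j = 1 \<or> H r j = -1" for r j
    using H unfolding hadamard_def by blast
  have Horth: "r < m*n \<Longrightarrow> r' < m*n \<Longrightarrow> r \<noteq> r' \<Longrightarrow> (\<Sum>j<m*n. H r j * H r' j) = 0" for r r'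
    using H unfolding hadamard_def by auto
  have epm: "eps a b = 1 \<or> eps a b = -1" for a b by (simp add: eps_def)
  have sgpm: "sg r i j = 1 \<or> sg r i j = -1" if "r < m*n" for r i j
    using Hpm[OF that kb, of i j] epm[of m i] epm[of n j] unfolding sg_def by auto
  have row: "(\<Sum>j<2*n. sg r i j) = 0" for r i
  proof -
    have "(\<Sum>j<2*n. sg r i j) = (\<Sum>j<2*n. eps n j * ((\<lambda>j'. H r ((i mod m)*n + j') * eps m i) (j mod n)))"
      unfolding sg_def k_def by (intro sum.cong) (auto simp: ac_simps)
    also have "\<dots> = 0" by (rule L0)
    finally show ?thesis .
  qed
  have col: "(\<Sum>i<2*m. sg r i j) = 0" for r j
  proof -
    have "(\<Sum>i<2*m. sg r i j) = (\<Sum>i<2*m. eps m i * ((\<lambda>i'. H r (i'*n + j mod n) * eps n j) (i mod m)))"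
      unfolding sg_def k_def by (intro sum.cong) (auto simp: ac_simps)
    also have "\<dots> = 0" by (rule L0)
    finally show ?thesis .
  qed
  have tot: "(\<Sum>i<2*m. \<Sum>j<2*n. sg r i j) = 0" for r using row by simp
  have cross: "(\<Sum>i<2*m. \<Sum>j<2*n. sg r i j * sg r' i j) = 0"
    if rr: "r < m*n" "r' < m*n" "r \<noteq> r'" for r r'
  proof -
    have eq: "sg r i j * sg r' i j = H r (k i j) * H r' (k i j)" for i j
      unfolding sg_def using epm[of m i] epm[of n j] by auto
    define G where "G = (\<lambda>i'. \<Sum>j<2*n. (\<lambda>j'. H r (i'*n + j') * H r' (i'*n + j')) (j mod n))"
    have G2: "G i' = 2 * (\<Sum>j<n. H r (i'*n + j) * H r' (i'*n + j))" for i'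
      unfolding G_def by (rule L1)
    have "(\<Sum>i<2*m. \<Sum>j<2*n. sg r i j * sg r' i j) = (\<Sum>i<2*m. G (i mod m))"
      unfolding eq k_def G_def by simp
    also have "\<dots> = 2 * (\<Sum>i<m. G i)" by (rule L1)
    also have "\<dots> = 4 * (\<Sum>i<m. \<Sum>j<n. H r (i*n + j) * H r' (i*n + j))"
      unfolding G2 by (simp add: sum_distrib_left)
    also have "\<dots> = 4 * (\<Sum>q<m*n. H r q * H r' q)"
      using L2[where h="\<lambda>q. H r q * H r' q" and m=m and n=n] by simp
    also have "\<dots> = 0" using Horth[OF rr] by simp
    finally show ?thesis .
  qed
  have fr: "freq_rect (2*m) (2*n) 2 (F r)" if rl: "r < m*n" for r
  proof -
    have A: "\<forall>i<2*m. \<forall>j<2*n. F r i j < 2" by (simp add: F_def)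
    have B: "2 * card {j. j < 2*n \<and> F r i j = s} = 2*n" if "s < 2" for i s
    proof -
      have "int (2 * card {j. j < 2*n \<and> F r i j = s}) = (\<Sum>j<2*n. 2 * of_bool (F r i j = s))"
        by (simp add: card_sum sum_distrib_left)
      also have "\<dots> = (\<Sum>j<2*n. 1 + alpha s * sg r i j)"
        unfolding F_def by (intro sum.cong refl ind1 sgpm rl that)
      also have "\<dots> = int (2*n) + alpha s * (\<Sum>j<2*n. sg r i j)"
        by (simp add: sum.distrib sum_distrib_left)
      also have "\<dots> = int (2*n)" using row by simp
      finally show ?thesis by linarith
    qed
    have C: "2 * card {i. i < 2*m \<and> F r i j = s} = 2*m" if "s < 2" for j s
    proof -
      have "int (2 * card {i. i < 2*m \<and> F r i j = s}) = (\<Sum>i<2*m. 2 * of_bool (F r i j = s))"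
        by (simp add: card_sum sum_distrib_left)
      also have "\<dots> = (\<Sum>i<2*m. 1 + alpha s * sg r i j)"
        unfolding F_def by (intro sum.cong refl ind1 sgpm rl that)
      also have "\<dots> = int (2*m) + alpha s * (\<Sum>i<2*m. sg r i j)"
        by (simp add: sum.distrib sum_distrib_left)
      also have "\<dots> = int (2*m)" using col by simp
      finally show ?thesis by linarith
    qed
    show ?thesis unfolding freq_rect_def using A B C by blast
  qed
  have orth: "orth_rect (2*m) (2*n) 2 (F r) (F r')"
    if rr: "r < m*n" "r' < m*n" "r \<noteq> r'" for r r'
  proof -
    have "2 * 2 * card {(i, j). i < 2*m \<and> j < 2*n \<and> F r i j = s \<and> F r' i j = t} = 2*m * (2*n)"
      if st: "s < 2" "t < 2" for s t
    proof -
      have "int (4 * card {(i, j). i < 2*m \<and> j < 2*n \<and> F r i j = s \<and> F r' i j = t})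
          = (\<Sum>i<2*m. \<Sum>j<2*n. 4 * of_bool (F r i j = s \<and> F r' i j = t))"
        by (simp add: card_sum2 sum_distrib_left mult.commute)
      also have "\<dots> = (\<Sum>i<2*m. \<Sum>j<2*n. 1 + alpha s * sg r i j + alpha t * sg r' i j
                         + alpha s * alpha t * (sg r i j * sg r' i j))"
        unfolding F_def by (intro sum.cong refl ind2 sgpm rr st)
      also have "\<dots> = int (2*m*(2*n)) + alpha s * (\<Sum>i<2*m. \<Sum>j<2*n. sg r i j)
                    + alpha t * (\<Sum>i<2*m. \<Sum>j<2*n. sg r' i j)
                    + alpha s * alpha t * (\<Sum>i<2*m. \<Sum>j<2*n. sg r i j * sg r' i j)"
        by (simp add: sum.distrib sum_distrib_left)
      also have "\<dots> = int (2*m*(2*n))" using tot cross[OF rr] by simp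
      finally show ?thesis by linarith
    qed
    then show ?thesis unfolding orth_rect_def by blast
  qed
  have "MOFR (m * n - 1) (2 * m) (2 * n) 2 F"
    unfolding MOFR_def using fr orth by auto
  then show ?thesis by blast
qed

end
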